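(* Let $m,n\in\mathbb{N}$ with $n\ge m$. With the exponential-minimum decoder $\Gamma$, cost $d$, and test statistic $\phi$ with block size $k=m$ defined in the context, let $\xi,\xi'$ be i.i.d. uniform on $\Xi^n$, let $Y = \mathtt{generate}(\xi;m,p,\Gamma)$ and $\widetilde{Y}=Y$. Then almost surely $$\mathbb{P}(\phi(\widetilde{Y},\xi')\le\phi(\widetilde{Y},\xi)\mid\widetilde{Y}) \le 2n\exp\!\big(-\min\{m\,\alpha(\widetilde{Y})^2/8,\ m\,\alpha(\widetilde{Y})/4\}\big).$$
   Context: Vocabulary $[N]$; $\Xi=[0,1]^N$; uniform on $\Xi^n$ means all $nN$ coordinates i.i.d. $\mathrm{Unif}([0,1])$. A language model $p$ gives next-token distributions $p(\cdot\mid x)$; $y_{:i-1}=(y_1,\dots,y_{i-1})$. Decoder: $\Gamma(\xi,\mu):=\operatorname{argmin}_{i\in[N]}-\log(\xi_i)/\mu(i)$. $\mathtt{generate}(\xi;m,p,\Gamma)$ outputs $y\in[N]^m$ with $y_i=\Gamma(\xi_i,p(\cdot\mid y_{:i-1}))$. Cost: $d(y,\xi):=-\sum_{i=1}^{|y|}\log\xi_{i,y_i}$. Test statistic with block size $k$: $\phi(y,\xi):=\min_{1\le i\le|y|-k+1,\ 1\le j\le n} d((y_i,\dots,y_{i+k-1}),(\xi_j,\dots,\xi_{j+k-1}))$, key indices cyclic modulo $n$. Watermark potential $\alpha(y):=1-\frac{1}{|y|}\sum_i p(y_i\mid y_{:i-1})$. *)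

theory Defs
  imports "HOL-Probability.Probability"
begin

text \<open>Conventions (0-indexed): the vocabulary [N] is {0..<N}; a key xi in Xi^n is a function
  xi :: nat \<times> nat \<Rightarrow> real, xi (j, t) being coordinate t of the j-th key vector (j < n, t < N).
  A language model is p :: nat list \<Rightarrow> nat pmf, with p ys the next-token distribution
  p(. | ys).\<close>

definition gumbel_score :: "real \<Rightarrow> real \<Rightarrow> ereal" where
  "gumbel_score u w = (if w \<le> 0 \<or> u \<le> 0 then \<infinity> else ereal (- ln u / w))"

text \<open>Exponential-minimum decoder Gamma(xi, mu) = argmin_{i in [N]} -log(xi_i)/mu(i)
  (ties, a null event, broken towards the smallest index).\<close>
definition decoder :: "nat \<Rightarrow> (nat \<Rightarrow> real) \<Rightarrow> (nat \<Rightarrow> real) \<Rightarrow> nat" where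
  "decoder N xi mu = (LEAST i. i < N \<and>
      (\<forall>j<N. gumbel_score (xi i) (mu i) \<le> gumbel_score (xi j) (mu j)))"

fun generate :: "nat \<Rightarrow> (nat list \<Rightarrow> nat pmf) \<Rightarrow> (nat \<times> nat \<Rightarrow> real) \<Rightarrow> nat \<Rightarrow> nat list" where
  "generate N p xi 0 = []"
| "generate N p xi (Suc i) =
     (let ys = generate N p xi i in ys @ [decoder N (\<lambda>t. xi (i, t)) (pmf (p ys))])"

definition cost_d :: "nat list \<Rightarrow> (nat \<times> nat \<Rightarrow> real) \<Rightarrow> real" where
  "cost_d y xi = - (\<Sum>i<length y. ln (xi (i, y ! i)))"

definition phi :: "nat \<Rightarrow> nat \<Rightarrow> nat list \<Rightarrow> (nat \<times> nat \<Rightarrow> real) \<Rightarrow> real" where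
  "phi n k y xi = Min {cost_d (take k (drop i y)) (\<lambda>(l, t). xi ((j + l) mod n, t)) |i j.
                        i + k \<le> length y \<and> j < n}"

definition alpha :: "(nat list \<Rightarrow> nat pmf) \<Rightarrow> nat list \<Rightarrow> real" where
  "alpha p y = 1 - (1 / real (length y)) * (\<Sum>i<length y. pmf (p (take i y)) (y ! i))"

text \<open>Uniform distribution on Xi^n = ([0,1]^N)^n: all nN coordinates iid Unif[0,1].\<close>
definition key_space :: "nat \<Rightarrow> nat \<Rightarrow> (nat \<times> nat \<Rightarrow> real) measure" where
  "key_space N n = PiM ({0..<n} \<times> {0..<N}) (\<lambda>_. uniform_measure lborel {0..1::real})"

end

theory Submission
  imports Defs
begin
abbreviation U :: "real measure" where "U \<equiv> uniform_measure lborel {0..1::real}"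

lemma prob_space_U: "prob_space U"
  by (intro prob_space_uniform_measure) auto

interpretation PU: product_sigma_finite "\<lambda>_::nat\<times>nat. U"
  unfolding product_sigma_finite_def
  using prob_space_U prob_space_imp_sigma_finite by blast

lemma coord_meas[measurable]: "(\<lambda>x. x c) \<in> borel_measurable (Pi\<^sub>M J (\<lambda>_::nat\<times>nat. U))"
proof (cases "c \<in> J")
  case True then show ?thesis by measurable
next
  case False
  have eq: "\<And>x. x \<in> space (Pi\<^sub>M J (\<lambda>_::nat\<times>nat. U)) \<Longrightarrow> x c = undefined"
    using False by (cases c) (auto simp: space_PiM PiE_def extensional_def)
  show ?thesis by (subst measurable_cong[OF eq]) simp_all
qed

lemma coord_meas_borel[measurable]: "(\<lambda>x. x c) \<in> borel_measurable (Pi\<^sub>M J (\<lambda>_::nat\<times>nat. borel))"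
proof (cases "c \<in> J")
  case True then show ?thesis by measurable
next
  case False
  have eq: "\<And>x. x \<in> space (Pi\<^sub>M J (\<lambda>_::nat\<times>nat. borel)) \<Longrightarrow> x c = undefined"
    using False by (cases c) (auto simp: space_PiM PiE_def extensional_def)
  show ?thesis by (subst measurable_cong[OF eq]) simp_all
qed

lemma gumbel_meas[measurable]:
  assumes [measurable]: "f \<in> borel_measurable M"
  shows "(\<lambda>x. gumbel_score (f x) w) \<in> borel_measurable M"
  unfolding gumbel_score_def by measurable

lemma decoder_alt: "decoder N r mu = (LEAST k. k \<in> {..<N} \<and>
      (\<forall>j\<in>{..<N}. gumbel_score (r k) (mu k) \<le> gumbel_score (r j) (mu j)))"
  unfolding decoder_def by (simp add: lessThan_iff Ball_def)

lemma pred_ereal_le: assumes [measurable]: "f \<in> borel_measurable M" "g \<in> borel_measurable M"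
  shows "Measurable.pred M (\<lambda>x. (f x::ereal) \<le> g x)"
  by measurable

lemma decoder_meas[measurable]:
  "(\<lambda>x. decoder N (\<lambda>t. x (i, t)) mu) \<in> measurable (Pi\<^sub>M J (\<lambda>_::nat\<times>nat. U)) (count_space UNIV)"
  unfolding decoder_alt
  apply (rule measurable_Least)
  apply (rule pred_intros_logic)+
   apply simp
  apply (rule pred_intros_finite)
   apply simp
  apply (rule pred_ereal_le; rule gumbel_meas; rule coord_meas)
  done

lemma decoder_min:
  assumes "0 < N"
  shows "decoder N r mu < N \<and> (\<forall>j<N. gumbel_score (r (decoder N r mu)) (mu (decoder N r mu))
            \<le> gumbel_score (r j) (mu j))"
proof -
  let ?s = "\<lambda>k. gumbel_score (r k) (mu k)"
  obtain k where k: "k \<in> {..<N}" "?s k = Min (?s ` {..<N})"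
    using Min_in[of "?s ` {..<N}"] assms by fastforce
  have "k < N \<and> (\<forall>j<N. ?s k \<le> ?s j)" using k by auto
  then show ?thesis unfolding decoder_def by (rule LeastI)
qed

lemma decoder_unique:
  assumes "y < N" "\<And>j. j < N \<Longrightarrow> j \<noteq> y \<Longrightarrow>
     gumbel_score (r y) (mu y) < gumbel_score (r j) (mu j)"
  shows "decoder N r mu = y"
  unfolding decoder_def
proof (rule Least_equality)
  show "y < N \<and> (\<forall>j<N. gumbel_score (r y) (mu y) \<le> gumbel_score (r j) (mu j))"
    using assms by (metis order.order_iff_strict)
next
  fix k assume "k < N \<and> (\<forall>j<N. gumbel_score (r k) (mu k) \<le> gumbel_score (r j) (mu j))"
  then show "y \<le> k" using assms by (metis le_refl not_le)
qed

lemma gen_eq: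
  "generate N p xi k = y \<longleftrightarrow>
     length y = k \<and> (\<forall>i<k. decoder N (\<lambda>t. xi (i, t)) (pmf (p (take i y))) = y ! i)"
proof (induction k arbitrary: y)
  case 0
  then show ?case by auto
next
  case (Suc k)
  show ?case
  proof
    assume g: "generate N p xi (Suc k) = y"
    define ys where "ys = generate N p xi k"
    have ih: "length ys = k \<and> (\<forall>i<k. decoder N (\<lambda>t. xi (i, t)) (pmf (p (take i ys))) = ys ! i)"
      using Suc.IH[of ys] ys_def by simp
    have y: "y = ys @ [decoder N (\<lambda>t. xi (k, t)) (pmf (p ys))]"
      using g ys_def by (simp add: Let_def)
    show "length y = Suc k \<and>
        (\<forall>i<Suc k. decoder N (\<lambda>t. xi (i, t)) (pmf (p (take i y))) = y ! i)"
    proof (intro conjI allI impI)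
      show "length y = Suc k" using y ih by simp
      fix i assume "i < Suc k"
      then consider "i < k" | "i = k" by linarith
      then show "decoder N (\<lambda>t. xi (i, t)) (pmf (p (take i y))) = y ! i"
      proof cases
        case 1 then show ?thesis using ih y by (simp add: nth_append)
      next
        case 2 then show ?thesis using ih y by (simp add: nth_append)
      qed
    qed
  next
    assume r: "length y = Suc k \<and>
        (\<forall>i<Suc k. decoder N (\<lambda>t. xi (i, t)) (pmf (p (take i y))) = y ! i)"
    define ys where "ys = take k y"
    have "length ys = k \<and> (\<forall>i<k. decoder N (\<lambda>t. xi (i, t)) (pmf (p (take i ys))) = ys ! i)"
      using r unfolding ys_def by (auto simp: min_def)
    then have g: "generate N p xi k = ys" using Suc.IH by blast
    have y: "y = ys @ [y ! k]" using r unfolding ys_def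
      by (metis lessI take_Suc_conv_app_nth take_all order_refl)
    show "generate N p xi (Suc k) = y"
      using g r y by (simp add: Let_def ys_def)
  qed
qed

lemma ennreal_div_one[simp]: "(x::ennreal) / 1 = x"
  by (simp add: divide_ennreal_def)

lemma U_sets[simp]: "sets U = sets borel" by simp

lemma emeasure_U_atMost: "0 \<le> a \<Longrightarrow> a \<le> 1 \<Longrightarrow> emeasure U {..a} = ennreal a"
proof -
  assume a: "0 \<le> a" "a \<le> 1"
  have "{0..1::real} \<inter> {..a} = {0..a}" using a by auto
  then show ?thesis using a by (simp add: emeasure_uniform_measure divide_ennreal_def)
qed

lemma emeasure_U_lessThan: "0 \<le> a \<Longrightarrow> a \<le> 1 \<Longrightarrow> emeasure U {..<a} = ennreal a"
proof -
  assume a: "0 \<le> a" "a \<le> 1"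
  have "{0..1::real} \<inter> {..<a} = {0..<a}" using a by auto
  then show ?thesis using a by (simp add: emeasure_uniform_measure divide_ennreal_def)
qed

lemma AE_U: "AE s in U. 0 < s \<and> s \<le> 1"
proof -
  have "AE s in lborel. s \<noteq> (0::real)"
    by (intro AE_I'[of "{0}"]) auto
  then show ?thesis
    by (intro AE_uniform_measureI) (auto elim!: eventually_mono)
qed

lemma U_powr:
  assumes "c > -1"
  shows "(\<integral>\<^sup>+s. ennreal (s powr c) \<partial>U) = ennreal (1 / (c + 1))"
proof -
  have "(\<integral>\<^sup>+s. ennreal (s powr c) \<partial>U) = (\<integral>\<^sup>+s. ennreal (s powr c) * indicator {0..1} s \<partial>lborel)"
    by (subst nn_integral_uniform_measure) (auto simp: divide_ennreal_def)
  also have "\<dots> = (\<integral>\<^sup>+s. ennreal (indicator {0..1} s * s powr c) \<partial>lborel)"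
    by (intro nn_integral_cong) (auto split: split_indicator)
  also have "\<dots> = ennreal (1 / (c + 1))"
    using has_integral_powr_from_0[OF assms, of 1] assms
    by (intro nn_integral_has_integral_lebesgue) auto
  finally show ?thesis .
qed

lemma sum_rest:
  fixes mu :: "nat pmf" and N :: nat
  assumes supp: "set_pmf mu \<subseteq> {0..<N}" and yN: "yi < N"
  shows "(\<Sum>j\<in>{0..<N} - {yi}. pmf mu j) = 1 - pmf mu yi"
proof -
  have "sum (pmf mu) {0..<N} = 1" by (rule sum_pmf_eq_1) (auto simp: supp)
  moreover have "sum (pmf mu) {0..<N} = pmf mu yi + sum (pmf mu) ({0..<N}-{yi})"
    by (rule sum.remove) (use yN in auto)
  ultimately show ?thesis by linarith
qed

lemma score_le_imp:
  assumes s: "0 < s" and q: "0 < q" and w: "0 < w"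
    and le: "gumbel_score s q \<le> gumbel_score u w"
  shows "u \<le> s powr (w / q)"
proof (cases "u \<le> 0")
  case True then show ?thesis using s by (smt (verit) powr_gt_zero)
next
  case False
  then have "ereal (- ln s / q) \<le> ereal (- ln u / w)"
    using le s q w by (simp add: gumbel_score_def)
  then have "- ln s / q \<le> - ln u / w" by simp
  then have "ln u \<le> (w / q) * ln s" using q w by (simp add: field_simps)
  then have "exp (ln u) \<le> exp ((w / q) * ln s)" by simp
  then show ?thesis using False s by (simp add: powr_def)
qed

lemma score_less_if:
  assumes s: "0 < s" and q: "0 < q" and w: "0 < w"
    and lt: "u < s powr (w / q)"
  shows "gumbel_score s q < gumbel_score u w"
proof (cases "u \<le> 0")
  case True then show ?thesis using s q by (simp add: gumbel_score_def)
next
  case False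
  then have "ln u < ln (s powr (w / q))" using lt s by (subst ln_less_cancel_iff) auto
  moreover have "ln (s powr (w / q)) = (w / q) * ln s" using s by (simp add: ln_powr)
  ultimately have "ln u < (w / q) * ln s" by linarith
  then have "- ln s / q < - ln u / w" using q w by (simp add: field_simps)
  then show ?thesis using False s q w by (simp add: gumbel_score_def)
qed

lemma row_upper:
  fixes mu :: "nat pmf" and lam q :: real and i :: nat
  assumes supp: "set_pmf mu \<subseteq> {0..<N}" and yN: "yi < N" and q: "q = pmf mu yi" "q > 0"
    and lam: "0 \<le> lam" "lam < 1"
  shows "(\<integral>\<^sup>+x. ennreal (exp (- lam * ln (x (i,yi)))) *
            indicator {x. decoder N (\<lambda>t. x (i,t)) (pmf mu) = yi} x \<partial>Pi\<^sub>M ({i}\<times>{0..<N}) (\<lambda>_. U))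
         \<le> ennreal (q / (1 - lam * q))"
proof -
  define S where "S = {0..<N} - {yi}"
  define K' where "K' = (\<lambda>j. (i,j)) ` S"
  have K: "{i}\<times>{0..<N} = insert (i,yi) K'" "(i,yi) \<notin> K'" "finite K'"
    using yN by (auto simp: K'_def S_def)
  define D where "D = {x. decoder N (\<lambda>t. x (i,t)) (pmf mu) = yi}"
  define e where "e j = pmf mu j / q" for j
  define b where "b j s u = (if pmf mu j = 0 then 1 else indicator {..s powr e j} u :: ennreal)" for j s u
  define f where "f x = ennreal (exp (- lam * ln (x (i,yi)))) * indicator D x" for x :: "nat\<times>nat \<Rightarrow> real"
  have q1: "q \<le> 1" using q by (simp add: pmf_le_1)
  have lq: "lam * q < 1"
  proof -
    have "lam * q \<le> lam * 1" using q1 lam by (intro mult_left_mono) auto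
    then show ?thesis using lam by linarith
  qed
  have meas: "f \<in> borel_measurable (Pi\<^sub>M (insert (i,yi) K') (\<lambda>_. U))"
    unfolding f_def D_def by measurable
  have inj: "inj_on (\<lambda>j. (i,j)) S" by (auto simp: inj_on_def)
  have sumS: "(\<Sum>j\<in>S. e j) = (1 - q) / q"
    unfolding e_def S_def using sum_rest[OF supp yN] q by (simp add: sum_divide_distrib[symmetric])
  have "integral\<^sup>N (Pi\<^sub>M ({i}\<times>{0..<N}) (\<lambda>_. U)) f =
      (\<integral>\<^sup>+ s. (\<integral>\<^sup>+ x. f (x((i,yi) := s)) \<partial>(Pi\<^sub>M K' (\<lambda>_. U))) \<partial>U)"
    unfolding K(1) by (rule PU.product_nn_integral_insert_rev[OF K(3) K(2) meas])
  also have "\<dots> \<le> (\<integral>\<^sup>+ s. ennreal (s powr ((1 - q) / q - lam)) \<partial>U)"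
  proof (rule nn_integral_mono_AE)
    show "AE s in U. (\<integral>\<^sup>+ x. f (x((i,yi) := s)) \<partial>(Pi\<^sub>M K' (\<lambda>_. U)))
                    \<le> ennreal (s powr ((1 - q) / q - lam))"
      using AE_U
    proof eventually_elim
      fix s :: real assume s: "0 < s \<and> s \<le> 1"
      have pt: "f (x((i,yi) := s)) \<le> ennreal (exp (- lam * ln s)) * (\<Prod>c\<in>K'. b (snd c) s (x c))"
        for x
      proof (cases "x((i,yi) := s) \<in> D")
        case True
        let ?r = "\<lambda>t. (x((i,yi) := s)) (i,t)"
        have dec: "decoder N ?r (pmf mu) = yi" using True by (simp add: D_def)
        have N0: "0 < N" using yN by simp
        have mn: "\<forall>j<N. gumbel_score (?r yi) (pmf mu yi) \<le> gumbel_score (?r j) (pmf mu j)"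
          using decoder_min[OF N0, of ?r "pmf mu"] dec by simp
        have "b (snd c) s (x c) = 1" if c: "c \<in> K'" for c
        proof -
          obtain j where j: "j \<in> S" "c = (i,j)" using c K'_def by auto
          show ?thesis
          proof (cases "pmf mu j = 0")
            case True then show ?thesis by (simp add: b_def j)
          next
            case False
            then have w: "0 < pmf mu j" using pmf_nonneg[of mu j] by linarith
            have "gumbel_score s q \<le> gumbel_score (x (i,j)) (pmf mu j)"
              using mn j q by (auto simp: S_def)
            then have "x (i,j) \<le> s powr e j"
              using score_le_imp[OF _ q(2) w] s by (simp add: e_def)
            then show ?thesis using False by (simp add: b_def j)
          qed
        qed
        then have "(\<Prod>c\<in>K'. b (snd c) s (x c)) = 1" by simp
        then show ?thesis by (simp add: f_def True)
      next
        case False then show ?thesis by (simp add: f_def)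
      qed
      have bmeas: "b j s \<in> borel_measurable U" for j
        unfolding b_def by (cases "pmf mu j = 0") (simp_all add: borel_measurable_indicator)
      have bmeas': "b j s \<in> borel_measurable borel" for j
        unfolding b_def by (cases "pmf mu j = 0") (simp_all add: borel_measurable_indicator)
      have bint: "integral\<^sup>N U (b j s) = ennreal (s powr e j)" if "j \<in> S" for j
      proof (cases "pmf mu j = 0")
        case True
        have "b j s = (\<lambda>_. 1)" using True by (simp add: b_def fun_eq_iff)
        then show ?thesis using s prob_space.emeasure_space_1[OF prob_space_U]
          by (simp add: e_def True)
      next
        case False
        have "0 \<le> e j" using q by (simp add: e_def)
        then have "s powr e j \<le> 1" using s by (intro powr_le1) auto
        have "b j s = indicator {..s powr e j}" using False by (simp add: b_def fun_eq_iff)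
        then show ?thesis using False s \<open>s powr e j \<le> 1\<close>
          by (simp add: emeasure_U_atMost)
      qed
      have "(\<integral>\<^sup>+ x. f (x((i,yi) := s)) \<partial>(Pi\<^sub>M K' (\<lambda>_. U)))
          \<le> (\<integral>\<^sup>+ x. ennreal (exp (- lam * ln s)) * (\<Prod>c\<in>K'. b (snd c) s (x c)) \<partial>(Pi\<^sub>M K' (\<lambda>_. U)))"
        by (intro nn_integral_mono pt)
      also have "\<dots> = ennreal (exp (- lam * ln s)) * (\<Prod>c\<in>K'. integral\<^sup>N U (b (snd c) s))"
      proof -
        have pint: "(\<integral>\<^sup>+x. (\<Prod>c\<in>K'. b (snd c) s (x c)) \<partial>Pi\<^sub>M K' (\<lambda>_. U)) = (\<Prod>c\<in>K'. integral\<^sup>N U (b (snd c) s))"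
          by (rule PU.product_nn_integral_prod[OF K(3), where f="\<lambda>c. b (snd c) s"]) (simp add: bmeas)
        have "(\<lambda>x. b (snd c) s (x c)) \<in> borel_measurable (Pi\<^sub>M K' (\<lambda>_. U))" for c
          using measurable_comp[OF coord_meas bmeas'] by (simp add: comp_def)
        then have "(\<lambda>x. \<Prod>c\<in>K'. b (snd c) s (x c)) \<in> borel_measurable (Pi\<^sub>M K' (\<lambda>_. U))"
          by (intro borel_measurable_prod_ennreal) auto
        then show ?thesis by (simp add: nn_integral_cmult pint)
      qed
      also have "(\<Prod>c\<in>K'. integral\<^sup>N U (b (snd c) s)) = (\<Prod>j\<in>S. ennreal (s powr e j))"
        unfolding K'_def by (subst prod.reindex[OF inj]) (auto intro!: prod.cong bint)
      also have "\<dots> = ennreal (s powr ((1 - q) / q))"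
        using s by (simp add: prod_ennreal powr_sum[symmetric] sumS)
      also have "ennreal (exp (- lam * ln s)) * ennreal (s powr ((1 - q) / q)) = ennreal (s powr ((1 - q) / q - lam))"
        using s by (simp add: ennreal_mult[symmetric] powr_def exp_add[symmetric] algebra_simps)
      finally show "(\<integral>\<^sup>+ x. f (x((i,yi) := s)) \<partial>(Pi\<^sub>M K' (\<lambda>_. U))) \<le> ennreal (s powr ((1 - q) / q - lam))" .
    qed
  qed
  also have "\<dots> = ennreal (1 / ((1 - q) / q - lam + 1))"
  proof (intro U_powr)
    show "(1 - q) / q - lam > -1" using q lq by (simp add: field_simps)
  qed
  also have "1 / ((1 - q) / q - lam + 1) = q / (1 - lam * q)"
  proof -
    have "(1 - q) / q - lam + 1 = (1 - lam * q) / q" using q by (simp add: field_simps)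
    then show ?thesis using q lq by simp
  qed
  finally show ?thesis unfolding f_def D_def .
qed

lemma row_lower:
  fixes mu :: "nat pmf" and q :: real and i :: nat
  assumes supp: "set_pmf mu \<subseteq> {0..<N}" and yN: "yi < N" and q: "q = pmf mu yi" "q > 0"
  shows "ennreal q \<le> (\<integral>\<^sup>+x. indicator {x. decoder N (\<lambda>t. x (i,t)) (pmf mu) = yi} x
           \<partial>Pi\<^sub>M ({i}\<times>{0..<N}) (\<lambda>_. U))"
proof -
  define S where "S = {0..<N} - {yi}"
  define K' where "K' = (\<lambda>j. (i,j)) ` S"
  have K: "{i}\<times>{0..<N} = insert (i,yi) K'" "(i,yi) \<notin> K'" "finite K'"
    using yN by (auto simp: K'_def S_def)
  define D where "D = {x. decoder N (\<lambda>t. x (i,t)) (pmf mu) = yi}"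
  define e where "e j = pmf mu j / q" for j
  define b where "b j s u = (if pmf mu j = 0 then 1 else indicator {..<s powr e j} u :: ennreal)" for j s u
  define f where "f x = (indicator D x :: ennreal)" for x :: "nat\<times>nat \<Rightarrow> real"
  have q1: "q \<le> 1" using q by (simp add: pmf_le_1)
  have meas: "f \<in> borel_measurable (Pi\<^sub>M (insert (i,yi) K') (\<lambda>_. U))"
    unfolding f_def D_def by measurable
  have inj: "inj_on (\<lambda>j. (i,j)) S" by (auto simp: inj_on_def)
  have sumS: "(\<Sum>j\<in>S. e j) = (1 - q) / q"
    unfolding e_def S_def using sum_rest[OF supp yN] q by (simp add: sum_divide_distrib[symmetric])
  have "ennreal q = ennreal (1 / ((1 - q) / q + 1))"
    using q by (simp add: field_simps)
  also have "\<dots> = (\<integral>\<^sup>+ s. ennreal (s powr ((1 - q) / q)) \<partial>U)"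
    using q q1 by (intro U_powr[symmetric]) (simp add: field_simps)
  also have "\<dots> \<le> (\<integral>\<^sup>+ s. (\<integral>\<^sup>+ x. f (x((i,yi) := s)) \<partial>(Pi\<^sub>M K' (\<lambda>_. U))) \<partial>U)"
  proof (rule nn_integral_mono_AE)
    show "AE s in U. ennreal (s powr ((1 - q) / q)) \<le> (\<integral>\<^sup>+ x. f (x((i,yi) := s)) \<partial>(Pi\<^sub>M K' (\<lambda>_. U)))"
      using AE_U
    proof eventually_elim
      fix s :: real assume s: "0 < s \<and> s \<le> 1"
      have b01: "b j s u = 0 \<or> b j s u = 1" for j u by (simp add: b_def split: split_indicator)
      have pt: "(\<Prod>c\<in>K'. b (snd c) s (x c)) \<le> f (x((i,yi) := s))" for x
      proof (cases "\<forall>c\<in>K'. b (snd c) s (x c) = 1")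
        case True
        let ?r = "\<lambda>t. (x((i,yi) := s)) (i,t)"
        have "decoder N ?r (pmf mu) = yi"
        proof (rule decoder_unique[OF yN])
          fix j assume j: "j < N" "j \<noteq> yi"
          then have jS: "j \<in> S" by (simp add: S_def)
          have bj: "b j s (x (i,j)) = 1" using True jS K'_def by auto
          have ry: "?r yi = s" "?r j = x (i,j)" using j by auto
          show "gumbel_score (?r yi) (pmf mu yi) < gumbel_score (?r j) (pmf mu j)"
          proof (cases "pmf mu j = 0")
            case True then show ?thesis using ry s q by (simp add: gumbel_score_def)
          next
            case False
            then have w: "0 < pmf mu j" using pmf_nonneg[of mu j] by linarith
            have "x (i,j) < s powr e j" using bj False by (cases "x (i,j) < s powr e j") (auto simp: b_def)
            then show ?thesis using score_less_if[OF _ q(2) w, of s "x (i,j)"] s ry q(1)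
              by (simp add: e_def)
          qed
        qed
        then have "f (x((i,yi) := s)) = 1" by (simp add: f_def D_def)
        moreover have "(\<Prod>c\<in>K'. b (snd c) s (x c)) = 1" using True by simp
        ultimately show ?thesis by simp
      next
        case False
        then obtain c where "c \<in> K'" "b (snd c) s (x c) = 0" using b01 by blast
        then have "(\<Prod>c\<in>K'. b (snd c) s (x c)) = 0" using K(3) by (intro prod_zero) auto
        then show ?thesis by (metis zero_le)
      qed
      have bmeas: "b j s \<in> borel_measurable U" for j
        unfolding b_def by (cases "pmf mu j = 0") (simp_all add: borel_measurable_indicator)
      have bmeas': "b j s \<in> borel_measurable borel" for j
        unfolding b_def by (cases "pmf mu j = 0") (simp_all add: borel_measurable_indicator)
      have bint: "integral\<^sup>N U (b j s) = ennreal (s powr e j)" if "j \<in> S" for j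
      proof (cases "pmf mu j = 0")
        case True
        have "b j s = (\<lambda>_. 1)" using True by (simp add: b_def fun_eq_iff)
        then show ?thesis using s prob_space.emeasure_space_1[OF prob_space_U]
          by (simp add: e_def True)
      next
        case False
        have "0 \<le> e j" using q by (simp add: e_def)
        then have "s powr e j \<le> 1" using s by (intro powr_le1) auto
        have "b j s = indicator {..<s powr e j}" using False by (simp add: b_def fun_eq_iff)
        then show ?thesis using False s \<open>s powr e j \<le> 1\<close>
          by (simp add: emeasure_U_lessThan del: emeasure_uniform_measure)
      qed
      have pint: "(\<integral>\<^sup>+x. (\<Prod>c\<in>K'. b (snd c) s (x c)) \<partial>Pi\<^sub>M K' (\<lambda>_. U)) = (\<Prod>c\<in>K'. integral\<^sup>N U (b (snd c) s))"
        by (rule PU.product_nn_integral_prod[OF K(3), where f="\<lambda>c. b (snd c) s"]) (simp add: bmeas)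
      have "ennreal (s powr ((1 - q) / q)) = (\<Prod>j\<in>S. ennreal (s powr e j))"
        using s by (simp add: prod_ennreal powr_sum[symmetric] sumS)
      also have "\<dots> = (\<Prod>c\<in>K'. integral\<^sup>N U (b (snd c) s))"
        unfolding K'_def by (subst prod.reindex[OF inj]) (auto intro!: prod.cong bint[symmetric])
      also have "\<dots> = (\<integral>\<^sup>+x. (\<Prod>c\<in>K'. b (snd c) s (x c)) \<partial>Pi\<^sub>M K' (\<lambda>_. U))"
        by (rule pint[symmetric])
      also have "\<dots> \<le> (\<integral>\<^sup>+ x. f (x((i,yi) := s)) \<partial>(Pi\<^sub>M K' (\<lambda>_. U)))"
        by (intro nn_integral_mono pt)
      finally show "ennreal (s powr ((1 - q) / q)) \<le> (\<integral>\<^sup>+ x. f (x((i,yi) := s)) \<partial>(Pi\<^sub>M K' (\<lambda>_. U)))" .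
    qed
  qed
  also have "\<dots> = integral\<^sup>N (Pi\<^sub>M ({i}\<times>{0..<N}) (\<lambda>_. U)) f"
    unfolding K(1) by (rule PU.product_nn_integral_insert_rev[OF K(3) K(2) meas, symmetric])
  finally show ?thesis unfolding f_def D_def .
qed

lemma row_zero:
  fixes mu :: "nat pmf" and i :: nat
  assumes supp: "set_pmf mu \<subseteq> {0..<N}" and q: "pmf mu yi = 0"
  shows "(\<integral>\<^sup>+x. indicator {x. decoder N (\<lambda>t. x (i,t)) (pmf mu) = yi} x
           \<partial>Pi\<^sub>M ({i}\<times>{0..<N}) (\<lambda>_. U)) = 0"
proof -
  have s1: "sum (pmf mu) {0..<N} = 1" by (rule sum_pmf_eq_1) (auto simp: supp)
  have "\<exists>j0<N. pmf mu j0 \<noteq> 0"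
  proof (rule ccontr)
    assume "\<not> (\<exists>j0<N. pmf mu j0 \<noteq> 0)"
    then have "\<forall>j\<in>{0..<N}. pmf mu j = 0" by auto
    then have "sum (pmf mu) {0..<N} = 0" by simp
    then show False using s1 by simp
  qed
  then obtain j0 where j0: "j0 < N" "pmf mu j0 \<noteq> 0" by blast
  have w: "0 < pmf mu j0" using j0 pmf_nonneg[of mu j0] by linarith
  define K' where "K' = {i}\<times>{0..<N} - {(i,j0)}"
  have K: "{i}\<times>{0..<N} = insert (i,j0) K'" "(i,j0) \<notin> K'" "finite K'"
    using j0 by (auto simp: K'_def)
  define D where "D = {x. decoder N (\<lambda>t. x (i,t)) (pmf mu) = yi}"
  define f where "f x = (indicator D x :: ennreal)" for x :: "nat\<times>nat \<Rightarrow> real"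
  have meas: "f \<in> borel_measurable (Pi\<^sub>M (insert (i,j0) K') (\<lambda>_. U))"
    unfolding f_def D_def by measurable
  have "integral\<^sup>N (Pi\<^sub>M ({i}\<times>{0..<N}) (\<lambda>_. U)) f =
      (\<integral>\<^sup>+ s. (\<integral>\<^sup>+ x. f (x((i,j0) := s)) \<partial>(Pi\<^sub>M K' (\<lambda>_. U))) \<partial>U)"
    unfolding K(1) by (rule PU.product_nn_integral_insert_rev[OF K(3) K(2) meas])
  also have "\<dots> = (\<integral>\<^sup>+ s. 0 \<partial>U)"
  proof (rule nn_integral_cong_AE)
    show "AE s in U. (\<integral>\<^sup>+ x. f (x((i,j0) := s)) \<partial>(Pi\<^sub>M K' (\<lambda>_. U))) = 0"
      using AE_U
    proof eventually_elim
      fix s :: real assume s: "0 < s \<and> s \<le> 1"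
      have "f (x((i,j0) := s)) = 0" for x
      proof (rule ccontr)
        assume "f (x((i,j0) := s)) \<noteq> 0"
        define r where "r = (\<lambda>t. (x((i,j0) := s)) (i,t))"
        from \<open>f (x((i,j0) := s)) \<noteq> 0\<close> have dec: "decoder N r (pmf mu) = yi"
          by (auto simp: f_def D_def r_def split: split_indicator_asm)
        have N0: "0 < N" using j0 by simp
        have "gumbel_score (r yi) (pmf mu yi) \<le> gumbel_score (r j0) (pmf mu j0)"
          using decoder_min[OF N0, of r "pmf mu"] j0 unfolding dec by blast
        moreover have "r j0 = s" by (simp add: r_def)
        ultimately have "gumbel_score (r yi) (pmf mu yi) \<le> gumbel_score s (pmf mu j0)" by simp
        then show False using q w s by (simp add: gumbel_score_def)
      qed
      then show "(\<integral>\<^sup>+ x. f (x((i,j0) := s)) \<partial>(Pi\<^sub>M K' (\<lambda>_. U))) = 0" by simp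
    qed
  qed
  finally show ?thesis unfolding f_def D_def by simp
qed

lemma rows_prod:
  fixes G :: "nat \<Rightarrow> (nat \<Rightarrow> real) \<Rightarrow> ennreal"
  assumes meas: "\<And>i J. (\<lambda>x. G i (\<lambda>t. x (i,t))) \<in> borel_measurable (Pi\<^sub>M J (\<lambda>_::nat\<times>nat. U))"
  shows "(\<integral>\<^sup>+x. (\<Prod>i<k. G i (\<lambda>t. x (i,t))) \<partial>Pi\<^sub>M ({0..<k}\<times>{0..<N}) (\<lambda>_. U))
       = (\<Prod>i<k. \<integral>\<^sup>+x. G i (\<lambda>t. x (i,t)) \<partial>Pi\<^sub>M ({i}\<times>{0..<N}) (\<lambda>_. U))"
proof (induction k)
  case 0
  then show ?case by (simp add: PiM_empty)
next
  case (Suc k)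
  define I where "I = {0..<k}\<times>{0..<N}"
  define J where "J = {k}\<times>{0..<N}"
  have IJ: "I \<inter> J = {}" "finite I" "finite J" by (auto simp: I_def J_def)
  have un: "{0..<Suc k}\<times>{0..<N} = I \<union> J" by (auto simp: I_def J_def)
  define f where "f x = (\<Prod>i<Suc k. G i (\<lambda>t. x (i,t)))" for x :: "nat\<times>nat \<Rightarrow> real"
  have fm: "f \<in> borel_measurable (Pi\<^sub>M (I \<union> J) (\<lambda>_. U))"
    unfolding f_def by (intro borel_measurable_prod_ennreal meas)
  have rowx: "(\<lambda>t. merge I J (x, y) (i,t)) = (\<lambda>t. x (i,t))"
    if "x \<in> space (Pi\<^sub>M I (\<lambda>_. U))" "i < k" for x y i
    using that by (auto simp: fun_eq_iff merge_def I_def J_def space_PiM PiE_def extensional_def)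
  have rowy: "(\<lambda>t. merge I J (x, y) (k,t)) = (\<lambda>t. y (k,t))"
    if "y \<in> space (Pi\<^sub>M J (\<lambda>_. U))" for x y
    using that by (auto simp: fun_eq_iff merge_def I_def J_def space_PiM PiE_def extensional_def)
  have "(\<integral>\<^sup>+x. f x \<partial>Pi\<^sub>M ({0..<Suc k}\<times>{0..<N}) (\<lambda>_. U))
      = (\<integral>\<^sup>+ x. (\<integral>\<^sup>+ y. f (merge I J (x, y)) \<partial>(Pi\<^sub>M J (\<lambda>_. U))) \<partial>(Pi\<^sub>M I (\<lambda>_. U)))"
    unfolding un by (rule PU.product_nn_integral_fold[OF IJ fm])
  also have "\<dots> = (\<integral>\<^sup>+ x. (\<Prod>i<k. G i (\<lambda>t. x (i,t))) *
        (\<integral>\<^sup>+ y. G k (\<lambda>t. y (k,t)) \<partial>(Pi\<^sub>M J (\<lambda>_. U))) \<partial>(Pi\<^sub>M I (\<lambda>_. U)))"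
  proof (rule nn_integral_cong)
    fix x assume x: "x \<in> space (Pi\<^sub>M I (\<lambda>_. U))"
    have "(\<integral>\<^sup>+ y. f (merge I J (x, y)) \<partial>(Pi\<^sub>M J (\<lambda>_. U)))
        = (\<integral>\<^sup>+ y. (\<Prod>i<k. G i (\<lambda>t. x (i,t))) * G k (\<lambda>t. y (k,t)) \<partial>(Pi\<^sub>M J (\<lambda>_. U)))"
      by (intro nn_integral_cong) (simp add: f_def rowx[OF x] rowy)
    also have "\<dots> = (\<Prod>i<k. G i (\<lambda>t. x (i,t))) * (\<integral>\<^sup>+ y. G k (\<lambda>t. y (k,t)) \<partial>(Pi\<^sub>M J (\<lambda>_. U)))"
      by (rule nn_integral_cmult) (rule meas)
    finally show "(\<integral>\<^sup>+ y. f (merge I J (x, y)) \<partial>(Pi\<^sub>M J (\<lambda>_. U))) = \<dots>" .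
  qed
  also have "\<dots> = (\<integral>\<^sup>+ x. (\<Prod>i<k. G i (\<lambda>t. x (i,t))) \<partial>(Pi\<^sub>M I (\<lambda>_. U))) *
        (\<integral>\<^sup>+ y. G k (\<lambda>t. y (k,t)) \<partial>(Pi\<^sub>M J (\<lambda>_. U)))"
    by (rule nn_integral_multc) (intro borel_measurable_prod_ennreal meas)
  also have "\<dots> = (\<Prod>i<Suc k. \<integral>\<^sup>+x. G i (\<lambda>t. x (i,t)) \<partial>Pi\<^sub>M ({i}\<times>{0..<N}) (\<lambda>_. U))"
    using Suc.IH by (simp add: I_def J_def)
  finally show ?case by (simp add: f_def)
qed

lemma mod_inj_aux1:
  fixes a b j n :: nat
  assumes "a \<le> b" "b < n" "(j + a) mod n = (j + b) mod n"
  shows "a = b"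
proof -
  have "n dvd (j+b) - (j+a)" using assms(1,3) mod_eq_dvd_iff_nat[of "j+a" "j+b" n] by simp
  then have d: "n dvd b - a" by simp
  show ?thesis
  proof (rule ccontr)
    assume "a \<noteq> b"
    then have "0 < b - a" "b - a < n" using assms by auto
    then show False using d nat_dvd_not_less by blast
  qed
qed

lemma mod_inj_aux:
  fixes a b j n :: nat
  assumes "a < n" "b < n" "(j + a) mod n = (j + b) mod n"
  shows "a = b"
  using mod_inj_aux1[of a b n j] mod_inj_aux1[of b a n j] assms by (cases "a \<le> b") auto

lemma U_exp_ln:
  assumes "c > -1"
  shows "(\<integral>\<^sup>+u. ennreal (exp (c * ln u)) \<partial>U) = ennreal (1 / (c + 1))"
proof -
  have "(\<integral>\<^sup>+u. ennreal (exp (c * ln u)) \<partial>U) = (\<integral>\<^sup>+u. ennreal (u powr c) \<partial>U)"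
    by (rule nn_integral_cong_AE) (use AE_U in \<open>auto elim!: eventually_mono simp: powr_def\<close>)
  then show ?thesis using U_powr[OF assms] by simp
qed

lemma shift_integral:
  fixes y :: "nat list" and lam :: real
  assumes mn: "length y \<le> n" and yN: "\<forall>l<length y. y ! l < N" and j: "j < n" and lam: "0 \<le> lam"
  shows "(\<integral>\<^sup>+x. (\<Prod>l<length y. ennreal (exp (lam * ln (x ((j + l) mod n, y ! l))))) \<partial>key_space N n)
       = ennreal (1 / (lam + 1)) ^ length y"
proof -
  define I where "I = {0..<n}\<times>{0..<N}"
  define c where "c l = ((j + l) mod n, y ! l)" for l
  define C where "C = c ` {..<length y}"
  define g where "g = (\<lambda>u::real. ennreal (exp (lam * ln u)))"
  define f where "f d = (if d \<in> C then g else (\<lambda>_. 1))" for d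
  have inj: "inj_on c {..<length y}"
    unfolding inj_on_def c_def using mn
    by (metis (no_types, lifting) Pair_inject lessThan_iff mod_inj_aux order_less_le_trans)
  have CI: "C \<subseteq> I" using j yN by (auto simp: C_def I_def c_def)
  have fI: "finite I" by (simp add: I_def)
  have cardC: "card C = length y" unfolding C_def using inj by (simp add: card_image)
  have "(\<Prod>l<length y. g (x (c l))) = (\<Prod>d\<in>I. f d (x d))" for x
  proof -
    have "(\<Prod>l<length y. g (x (c l))) = (\<Prod>d\<in>C. g (x d))"
      unfolding C_def by (subst prod.reindex[OF inj]) simp
    also have "\<dots> = (\<Prod>d\<in>I. f d (x d))"
      by (rule prod.mono_neutral_cong_left[OF fI CI]) (auto simp: f_def)
    finally show ?thesis .
  qed
  then have "(\<integral>\<^sup>+x. (\<Prod>l<length y. ennreal (exp (lam * ln (x ((j + l) mod n, y ! l))))) \<partial>key_space N n)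
      = (\<integral>\<^sup>+x. (\<Prod>d\<in>I. f d (x d)) \<partial>Pi\<^sub>M I (\<lambda>_. U))"
    by (simp add: key_space_def I_def g_def c_def)
  also have "\<dots> = (\<Prod>d\<in>I. integral\<^sup>N U (f d))"
  proof (rule PU.product_nn_integral_prod[OF fI])
    have "(\<lambda>u::real. exp (lam * ln u)) \<in> borel_measurable borel" by measurable
    then have "(\<lambda>u::real. exp (lam * ln u)) \<in> borel_measurable U"
      by (simp cong: measurable_cong_sets)
    then show "f d \<in> borel_measurable U" for d by (simp add: f_def g_def)
  qed
  also have "\<dots> = (\<Prod>d\<in>C. integral\<^sup>N U g)"
    using prob_space.emeasure_space_1[OF prob_space_U]
    by (intro sym[OF prod.mono_neutral_cong_left[OF fI CI]]) (auto simp: f_def)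
  also have "\<dots> = ennreal (1 / (lam + 1)) ^ length y"
    using U_exp_ln[of lam] lam cardC by (simp add: g_def)
  finally show ?thesis .
qed

lemma factor_bound:
  fixes lam x :: real
  assumes lam: "0 \<le> lam" "lam \<le> 1/4" and x: "0 \<le> x" "x \<le> lam"
  shows "1 / (lam + 1) * (1 / (1 - x)) \<le> exp (- lam + 2 * lam^2 + x)"
proof -
  have "lam - lam^2 \<le> ln (1 + lam)" using ln_one_plus_pos_lower_bound[of lam] lam by (simp add: power2_eq_square)
  then have e1: "exp (lam - lam^2) \<le> 1 + lam" using lam by (metis exp_le_cancel_iff exp_ln add_pos_nonneg zero_less_one)
  have x4: "x \<le> 1/4" using x lam by linarith
  define t where "t = x + x^2"
  have t0: "0 \<le> t" using x by (simp add: t_def)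
  have poly: "(1 - x) * (1 + t + t^2 / 2) = 1 + x^2 * (1 - x - x^2 - x^3) / 2"
    by (simp add: t_def power2_eq_square power3_eq_cube field_simps)
  have "x^2 \<le> x * (1/4)" unfolding power2_eq_square using x x4 by (intro mult_left_mono) auto
  moreover have "x^3 \<le> x * (1/4)"
  proof -
    have "x^2 \<le> 1/4" using \<open>x^2 \<le> x * (1/4)\<close> x4 x by linarith
    then have "x * x^2 \<le> x * (1/4)" using x by (intro mult_left_mono) auto
    then show ?thesis by (simp add: power3_eq_cube power2_eq_square)
  qed
  ultimately have "0 \<le> 1 - x - x^2 - x^3" using x4 by linarith
  then have "1 \<le> (1 - x) * (1 + t + t^2 / 2)" unfolding poly by simp
  also have "\<dots> \<le> (1 - x) * exp t"
    using exp_lower_Taylor_quadratic[OF t0] x4 by (intro mult_left_mono) auto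
  finally have e2': "1 \<le> (1 - x) * exp t" .
  have e2: "exp (- x - x^2) \<le> 1 - x"
  proof -
    have "exp (- x - x^2) * 1 \<le> exp (- x - x^2) * ((1 - x) * exp t)"
      using e2' by (intro mult_left_mono) auto
    also have "\<dots> = 1 - x" by (simp add: t_def exp_minus[symmetric] exp_add[symmetric] algebra_simps)
    finally show ?thesis by simp
  qed
  have "x^2 \<le> lam^2" using x by (intro power_mono) auto
  then have e3: "exp (- x - lam^2) \<le> exp (- x - x^2)" by simp
  have pos: "0 < 1 - x" using x lam by linarith
  have "exp (lam - 2 * lam^2 - x) = exp (lam - lam^2) * exp (- x - lam^2)"
    by (simp add: exp_add[symmetric] algebra_simps)
  also have "\<dots> \<le> (1 + lam) * (1 - x)"
    using e1 order.trans[OF e3 e2] lam by (intro mult_mono) auto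
  finally have le: "exp (lam - 2 * lam^2 - x) \<le> (1 + lam) * (1 - x)" .
  have "1 / (lam + 1) * (1 / (1 - x)) = 1 / ((1 + lam) * (1 - x))" by (simp add: algebra_simps)
  also have "\<dots> \<le> 1 / exp (lam - 2 * lam^2 - x)"
    using le pos lam by (intro divide_left_mono) auto
  also have "\<dots> = exp (- lam + 2 * lam^2 + x)"
  proof -
    have "exp (- lam + 2 * lam^2 + x) = exp (- (lam - 2 * lam^2 - x))" by simp
    then show ?thesis by (simp only: exp_minus) (simp add: divide_inverse)
  qed
  finally show ?thesis .
qed

lemma numeric:
  fixes mu :: "nat \<Rightarrow> real" and m :: nat and a :: real
  assumes m: "1 \<le> m" and mu: "\<And>i. i < m \<Longrightarrow> 0 \<le> mu i \<and> mu i \<le> 1"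
    and a: "a = 1 - (1 / real m) * (\<Sum>i<m. mu i)"
  shows "0 \<le> a" "a \<le> 1"
    "(1 / (a/4 + 1))^m * (\<Prod>i<m. 1 / (1 - a/4 * mu i)) \<le> exp (- (real m * a^2 / 8))"
proof -
  have s0: "0 \<le> (\<Sum>i<m. mu i)" using mu by (intro sum_nonneg) auto
  have s1: "(\<Sum>i<m. mu i) \<le> real m" using sum_mono[of "{..<m}" mu "\<lambda>_. 1"] mu by auto
  have sm: "(\<Sum>i<m. mu i) = real m * (1 - a)" using a m by (simp add: field_simps)
  have am: "a * real m = real m - (\<Sum>i<m. mu i)" using sm by (simp add: algebra_simps)
  have mpos: "0 < real m" using m by simp
  have "0 \<le> a * real m" using am s1 by linarith
  then show a0: "0 \<le> a" using mpos by (simp add: zero_le_mult_iff)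
  have "a * real m \<le> 1 * real m" using am s0 by linarith
  then show a1: "a \<le> 1" using mpos by (simp only: mult_le_cancel_right)
  define lam where "lam = a / 4"
  have lam: "0 \<le> lam" "lam \<le> 1/4" using a0 a1 by (auto simp: lam_def)
  have "(1 / (lam + 1))^m * (\<Prod>i<m. 1 / (1 - lam * mu i)) = (\<Prod>i<m. 1 / (lam + 1) * (1 / (1 - lam * mu i)))"
    by (simp only: prod.distrib prod_constant card_lessThan)
  also have "\<dots> \<le> (\<Prod>i<m. exp (- lam + 2 * lam^2 + lam * mu i))"
  proof (rule prod_mono)
    fix i assume "i \<in> {..<m}"
    then have mi: "0 \<le> mu i" "mu i \<le> 1" using mu by auto
    have x: "0 \<le> lam * mu i" "lam * mu i \<le> lam" using mi lam by (auto intro: mult_left_le)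
    have "0 < 1 - lam * mu i" using x lam by linarith
    then show "0 \<le> 1 / (lam + 1) * (1 / (1 - lam * mu i)) \<and>
        1 / (lam + 1) * (1 / (1 - lam * mu i)) \<le> exp (- lam + 2 * lam^2 + lam * mu i)"
      using factor_bound[OF lam x] lam by simp
  qed
  also have "\<dots> = exp (\<Sum>i<m. - lam + 2 * lam^2 + lam * mu i)" by (simp add: exp_sum)
  also have "(\<Sum>i<m. - lam + 2 * lam^2 + lam * mu i) = real m * (- lam + 2 * lam^2) + lam * (\<Sum>i<m. mu i)"
    by (simp add: sum.distrib sum_distrib_left)
  also have "\<dots> = - (real m * a^2 / 8)" unfolding sm lam_def by (simp add: power2_eq_square field_simps)
  finally show "(1 / (a/4 + 1))^m * (\<Prod>i<m. 1 / (1 - a/4 * mu i)) \<le> exp (- (real m * a^2 / 8))"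
    by (simp add: lam_def)
qed

lemma prod_ind:
  fixes a :: "nat \<Rightarrow> ennreal"
  shows "(\<Prod>i<m. a i * (if P i then 1 else 0)) = (\<Prod>i<m. a i) * (if \<forall>i<m. P i then 1 else 0)"
proof (induction m)
  case 0 then show ?case by simp
next
  case (Suc m)
  show ?case unfolding prod.lessThan_Suc Suc.IH
    by (auto simp: less_Suc_eq)
qed

lemma phi_set:
  assumes "length y = m" "m \<le> n"
  shows "{cost_d (take m (drop i y)) (\<lambda>(l, t). xi ((j + l) mod n, t)) |i j. i + m \<le> length y \<and> j < n}
       = (\<lambda>j. cost_d y (\<lambda>(l, t). xi ((j + l) mod n, t))) ` {..<n}"
  using assms by auto

lemma phi_facts:
  assumes len: "length y = m" and m: "1 \<le> m" and mn: "m \<le> n"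
  shows "phi n m y xi \<le> cost_d y xi"
    and "\<exists>j<n. phi n m y xi = cost_d y (\<lambda>(l, t). xi ((j + l) mod n, t))"
proof -
  have eq: "phi n m y xi = Min ((\<lambda>j. cost_d y (\<lambda>(l, t). xi ((j + l) mod n, t))) ` {..<n})"
    unfolding phi_def using phi_set[OF len mn] by simp
  have n0: "0 < n" using m mn by linarith
  then have ne: "{..<n} \<noteq> {}" by (metis lessThan_iff empty_iff)
  have "cost_d y (\<lambda>(l, t). xi ((0 + l) mod n, t)) = cost_d y xi"
    unfolding cost_d_def using len mn by (intro arg_cong[where f=uminus] sum.cong) auto
  moreover have "cost_d y (\<lambda>(l, t). xi ((0 + l) mod n, t)) \<in> (\<lambda>j. cost_d y (\<lambda>(l, t). xi ((j + l) mod n, t))) ` {..<n}"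
    using n0 by (intro imageI) simp
  ultimately show "phi n m y xi \<le> cost_d y xi" unfolding eq
    by (metis Min_le finite_imageI finite_lessThan)
  have "phi n m y xi \<in> (\<lambda>j. cost_d y (\<lambda>(l, t). xi ((j + l) mod n, t))) ` {..<n}"
    unfolding eq using ne by (intro Min_in) auto
  then show "\<exists>j<n. phi n m y xi = cost_d y (\<lambda>(l, t). xi ((j + l) mod n, t))" by auto
qed

theorem lemma8:
  fixes N m n :: nat and p :: "nat list \<Rightarrow> nat pmf"
  assumes "\<And>ys. set_pmf (p ys) \<subseteq> {0..<N}"
    and "1 \<le> m" and "m \<le> n"
  shows "\<forall>y. \<P>(xi in key_space N n. generate N p xi m = y) > 0 \<longrightarrow>
     \<P>(w in key_space N n \<Otimes>\<^sub>M key_space N n.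
          phi n m y (snd w) \<le> phi n m y (fst w) \<bar> generate N p (fst w) m = y)
     \<le> 2 * real n * exp (- min (real m * (alpha p y)\<^sup>2 / 8) (real m * alpha p y / 4))"
proof (intro allI impI)
  fix y
  let ?M = "key_space N n"
  assume Bpos: "\<P>(xi in ?M. generate N p xi m = y) > 0"
  define Bset where "Bset = {x \<in> space ?M. generate N p x m = y}"
  have Mps: "prob_space ?M" unfolding key_space_def by (intro prob_space_PiM) (simp add: prob_space_U)
  interpret M: prob_space ?M by (rule Mps)
  have Bpos': "measure ?M Bset > 0" using Bpos by (simp add: Bset_def)
  have Bsets: "Bset \<in> sets ?M" using Bpos' measure_notin_sets[of Bset ?M] by force
  have "Bset \<noteq> {}" using Bpos' by force
  then obtain x0 where "x0 \<in> Bset" by blast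
  then have lenm: "length y = m"
    and dec0: "\<forall>i<m. decoder N (\<lambda>t. x0 (i, t)) (pmf (p (take i y))) = y ! i"
    by (auto simp: Bset_def gen_eq)
  obtain z where "z \<in> set_pmf (p [])" using set_pmf_not_empty by fast
  then have N0: "0 < N" using assms(1)[of "[]"] by auto
  have yN: "\<forall>i<m. y ! i < N" using decoder_min[OF N0] dec0 by metis
  define q where "q i = pmf (p (take i y)) (y ! i)" for i
  define a where "a = alpha p y"
  have a_eq: "a = 1 - (1 / real m) * (\<Sum>i<m. q i)" by (simp add: a_def alpha_def lenm q_def)
  have q01: "\<And>i. i < m \<Longrightarrow> 0 \<le> q i \<and> q i \<le> 1" by (simp add: q_def pmf_le_1)
  note num = numeric[OF assms(2) q01 a_eq]
  define lam where "lam = a / 4"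
  have lam: "0 \<le> lam" "lam \<le> 1/4" using num by (auto simp: lam_def)
  define Dr where "Dr i r = (decoder N r (pmf (p (take i y))) = y ! i)" for i r
  have Bchar: "x \<in> Bset \<longleftrightarrow> (\<forall>i<m. Dr i (\<lambda>t. x (i,t)))" if "x \<in> space ?M" for x
    using that by (simp add: Bset_def gen_eq lenm Dr_def)
  define Pi where "Pi i = (\<integral>\<^sup>+x. indicator {x. decoder N (\<lambda>t. x (i,t)) (pmf (p (take i y))) = y ! i} x
           \<partial>Pi\<^sub>M ({i}\<times>{0..<N}) (\<lambda>_. U))" for i
  have PiK1: "prob_space (Pi\<^sub>M ({i}\<times>{0..<N}) (\<lambda>_. U))" for i :: nat
    by (intro prob_space_PiM) (simp add: prob_space_U)
  define G0 where "G0 i r = (if i < m then (if Dr i r then 1 else 0) else 1 :: ennreal)" for i r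
  have G0m: "(\<lambda>x. G0 i (\<lambda>t. x (i,t))) \<in> borel_measurable (Pi\<^sub>M J (\<lambda>_::nat\<times>nat. U))" for i J
    unfolding G0_def Dr_def by measurable
  have PB: "emeasure ?M Bset = (\<Prod>i<m. Pi i)"
  proof -
    have "emeasure ?M Bset = (\<integral>\<^sup>+x. indicator Bset x \<partial>?M)" using Bsets by simp
    also have "\<dots> = (\<integral>\<^sup>+x. (\<Prod>i<n. G0 i (\<lambda>t. x (i,t))) \<partial>?M)"
    proof (rule nn_integral_cong)
      fix x assume x: "x \<in> space ?M"
      have "(\<Prod>i<n. G0 i (\<lambda>t. x (i,t))) = (\<Prod>i<m. G0 i (\<lambda>t. x (i,t)))"
        using assms(3) by (intro prod.mono_neutral_right) (auto simp: G0_def)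
      also have "\<dots> = (\<Prod>i<m. 1 * (if Dr i (\<lambda>t. x (i,t)) then 1 else 0))"
        by (intro prod.cong) (auto simp: G0_def)
      also have "\<dots> = (\<Prod>i<m. (1::ennreal)) * (if \<forall>i<m. Dr i (\<lambda>t. x (i,t)) then 1 else 0)"
        by (rule prod_ind)
      finally show "indicator Bset x = (\<Prod>i<n. G0 i (\<lambda>t. x (i,t)))"
        using Bchar[OF x] by (simp add: indicator_def)
    qed
    also have "\<dots> = (\<Prod>i<n. \<integral>\<^sup>+x. G0 i (\<lambda>t. x (i,t)) \<partial>Pi\<^sub>M ({i}\<times>{0..<N}) (\<lambda>_. U))"
      unfolding key_space_def by (rule rows_prod[OF G0m])
    also have "\<dots> = (\<Prod>i<m. \<integral>\<^sup>+x. G0 i (\<lambda>t. x (i,t)) \<partial>Pi\<^sub>M ({i}\<times>{0..<N}) (\<lambda>_. U))"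
    proof (rule prod.mono_neutral_right)
      show "\<forall>i\<in>{..<n} - {..<m}. (\<integral>\<^sup>+x. G0 i (\<lambda>t. x (i,t)) \<partial>Pi\<^sub>M ({i}\<times>{0..<N}) (\<lambda>_. U)) = 1"
        using prob_space.emeasure_space_1[OF PiK1] by (auto simp: G0_def)
    qed (use assms(3) in auto)
    also have "\<dots> = (\<Prod>i<m. Pi i)"
      by (intro prod.cong refl) (auto simp: G0_def Pi_def Dr_def indicator_def of_bool_def intro!: nn_integral_cong)
    finally show ?thesis .
  qed
  have qpos: "0 < q i" if i: "i < m" for i
  proof (rule ccontr)
    assume "\<not> 0 < q i"
    then have q0: "pmf (p (take i y)) (y ! i) = 0" using q01[OF i] unfolding q_def by linarith
    have "Pi i = 0" unfolding Pi_def
      by (rule row_zero[where mu="p (take i y)" and yi="y!i" and i=i, OF assms(1) q0])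
    then have "emeasure ?M Bset = 0" unfolding PB using i by (intro prod_zero) auto
    then show False using Bpos' by (simp add: measure_def)
  qed
  have PBge: "ennreal (\<Prod>i<m. q i) \<le> emeasure ?M Bset"
  proof -
    have "ennreal (\<Prod>i<m. q i) = (\<Prod>i<m. ennreal (q i))"
      using q01 by (intro prod_ennreal[symmetric]) auto
    also have "\<dots> \<le> (\<Prod>i<m. Pi i)"
    proof (rule prod_mono_ennreal)
      fix i assume "i \<in> {..<m}"
      then have i: "i < m" by simp
      show "ennreal (q i) \<le> Pi i" unfolding Pi_def
        by (rule row_lower[where mu="p (take i y)" and yi="y!i" and q="q i" and i=i, OF assms(1)])
           (use yN i qpos[OF i] in \<open>auto simp: q_def\<close>)
    qed
    finally show ?thesis using PB by simp
  qed
  define fa where "fa x = ennreal (exp (lam * cost_d y x)) * indicator Bset x" for x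
  have lq: "0 < 1 - lam * q i" if "i < m" for i
  proof -
    have "lam * q i \<le> lam * 1" using q01[OF that] lam by (intro mult_left_mono) auto
    then show ?thesis using lam by linarith
  qed
  define G1 where "G1 i r = (if i < m then ennreal (exp (- lam * ln (r (y!i)))) * (if Dr i r then 1 else 0) else 1)" for i r
  have G1m: "(\<lambda>x. G1 i (\<lambda>t. x (i,t))) \<in> borel_measurable (Pi\<^sub>M J (\<lambda>_::nat\<times>nat. U))" for i J
    unfolding G1_def Dr_def by measurable
  have fa_int: "integral\<^sup>N ?M fa \<le> ennreal (\<Prod>i<m. q i / (1 - lam * q i))"
  proof -
    have "integral\<^sup>N ?M fa = (\<integral>\<^sup>+x. (\<Prod>i<n. G1 i (\<lambda>t. x (i,t))) \<partial>?M)"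
    proof (rule nn_integral_cong)
      fix x assume x: "x \<in> space ?M"
      have "(\<Prod>i<n. G1 i (\<lambda>t. x (i,t))) = (\<Prod>i<m. G1 i (\<lambda>t. x (i,t)))"
        using assms(3) by (intro prod.mono_neutral_right) (auto simp: G1_def)
      also have "\<dots> = (\<Prod>i<m. ennreal (exp (- lam * ln (x (i, y!i)))) * (if Dr i (\<lambda>t. x (i,t)) then 1 else 0))"
        by (intro prod.cong) (auto simp: G1_def)
      also have "\<dots> = (\<Prod>i<m. ennreal (exp (- lam * ln (x (i, y!i))))) * (if \<forall>i<m. Dr i (\<lambda>t. x (i,t)) then 1 else 0)"
        by (rule prod_ind)
      also have "(\<Prod>i<m. ennreal (exp (- lam * ln (x (i, y!i))))) = ennreal (exp (lam * cost_d y x))"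
      proof -
        have "(\<Prod>i<m. ennreal (exp (- lam * ln (x (i, y!i))))) = ennreal (\<Prod>i<m. exp (- lam * ln (x (i, y!i))))"
          by (intro prod_ennreal) auto
        also have "(\<Prod>i<m. exp (- lam * ln (x (i, y!i)))) = exp (\<Sum>i<m. - lam * ln (x (i, y!i)))"
          by (simp add: exp_sum)
        also have "(\<Sum>i<m. - lam * ln (x (i, y!i))) = lam * cost_d y x"
          by (simp add: cost_d_def lenm sum_distrib_left sum_negf)
        finally show ?thesis .
      qed
      finally show "fa x = (\<Prod>i<n. G1 i (\<lambda>t. x (i,t)))"
        using Bchar[OF x] by (simp add: fa_def indicator_def)
    qed
    also have "\<dots> = (\<Prod>i<n. \<integral>\<^sup>+x. G1 i (\<lambda>t. x (i,t)) \<partial>Pi\<^sub>M ({i}\<times>{0..<N}) (\<lambda>_. U))"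
      unfolding key_space_def by (rule rows_prod[OF G1m])
    also have "\<dots> = (\<Prod>i<m. \<integral>\<^sup>+x. G1 i (\<lambda>t. x (i,t)) \<partial>Pi\<^sub>M ({i}\<times>{0..<N}) (\<lambda>_. U))"
    proof (rule prod.mono_neutral_right)
      show "\<forall>i\<in>{..<n} - {..<m}. (\<integral>\<^sup>+x. G1 i (\<lambda>t. x (i,t)) \<partial>Pi\<^sub>M ({i}\<times>{0..<N}) (\<lambda>_. U)) = 1"
        using prob_space.emeasure_space_1[OF PiK1] by (auto simp: G1_def)
    qed (use assms(3) in auto)
    also have "\<dots> \<le> (\<Prod>i<m. ennreal (q i / (1 - lam * q i)))"
    proof (rule prod_mono_ennreal)
      fix i assume "i \<in> {..<m}"
      then have i: "i < m" by simp
      have "(\<integral>\<^sup>+x. G1 i (\<lambda>t. x (i,t)) \<partial>Pi\<^sub>M ({i}\<times>{0..<N}) (\<lambda>_. U))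
          = (\<integral>\<^sup>+x. ennreal (exp (- lam * ln (x (i,y!i)))) *
            indicator {x. decoder N (\<lambda>t. x (i,t)) (pmf (p (take i y))) = y!i} x \<partial>Pi\<^sub>M ({i}\<times>{0..<N}) (\<lambda>_. U))"
        using i by (intro nn_integral_cong) (auto simp: G1_def Dr_def indicator_def)
      also have "\<dots> \<le> ennreal (q i / (1 - lam * q i))"
        by (rule row_upper[where mu="p (take i y)" and yi="y!i" and q="q i" and i=i, OF assms(1)])
           (use yN i qpos[OF i] lam in \<open>auto simp: q_def\<close>)
      finally show "(\<integral>\<^sup>+x. G1 i (\<lambda>t. x (i,t)) \<partial>Pi\<^sub>M ({i}\<times>{0..<N}) (\<lambda>_. U)) \<le> ennreal (q i / (1 - lam * q i))" .
    qed
    also have "\<dots> = ennreal (\<Prod>i<m. q i / (1 - lam * q i))"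
      using q01 lq by (intro prod_ennreal) (auto intro: divide_nonneg_pos)
    finally show ?thesis .
  qed
  define fb where "fb j x = ennreal (exp (- lam * cost_d y (\<lambda>(l, t). x ((j + l) mod n, t))))" for j x
  have fb_int: "integral\<^sup>N ?M (fb j) = ennreal (1 / (lam + 1)) ^ m" if j: "j < n" for j
  proof -
    have "integral\<^sup>N ?M (fb j) = (\<integral>\<^sup>+x. (\<Prod>l<length y. ennreal (exp (lam * ln (x ((j + l) mod n, y ! l))))) \<partial>?M)"
    proof (rule nn_integral_cong)
      fix x
      have "(\<Prod>l<length y. ennreal (exp (lam * ln (x ((j + l) mod n, y ! l)))))
          = ennreal (\<Prod>l<length y. exp (lam * ln (x ((j + l) mod n, y ! l))))"
        by (intro prod_ennreal) auto
      also have "(\<Prod>l<length y. exp (lam * ln (x ((j + l) mod n, y ! l))))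
          = exp (\<Sum>l<length y. lam * ln (x ((j + l) mod n, y ! l)))"
        by (simp add: exp_sum)
      also have "(\<Sum>l<length y. lam * ln (x ((j + l) mod n, y ! l)))
          = - lam * cost_d y (\<lambda>(l, t). x ((j + l) mod n, t))"
        by (simp add: cost_d_def sum_distrib_left sum_negf)
      finally show "fb j x = (\<Prod>l<length y. ennreal (exp (lam * ln (x ((j + l) mod n, y ! l)))))"
        by (simp add: fb_def)
    qed
    also have "\<dots> = ennreal (1 / (lam + 1)) ^ length y"
      by (rule shift_integral) (use lenm assms(3) yN j lam in auto)
    finally show ?thesis using lenm by simp
  qed
  note Bsets[measurable]
  have e_meas: "(\<lambda>x. ennreal (exp (lam * cost_d y x))) \<in> borel_measurable ?M"
    unfolding cost_d_def key_space_def by measurable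
  have fa_meas[measurable]: "fa \<in> borel_measurable ?M"
    unfolding fa_def by (intro borel_measurable_times_ennreal e_meas borel_measurable_indicator Bsets)
  have fb_meas[measurable]: "fb j \<in> borel_measurable ?M" for j
    unfolding fb_def cost_d_def key_space_def by measurable
  let ?MM = "?M \<Otimes>\<^sub>M ?M"
  define A' where "A' = {w \<in> space ?MM. phi n m y (snd w) \<le> phi n m y (fst w) \<and> generate N p (fst w) m = y}"
  define bound where "bound = real n * (1 / (lam + 1)) ^ m * (\<Prod>i<m. q i / (1 - lam * q i))"
  have qprod_pos: "0 < (\<Prod>i<m. q i)" using qpos by (intro prod_pos) auto
  have bound_nn: "0 \<le> bound" unfolding bound_def
    using q01 lq lam by (intro mult_nonneg_nonneg prod_nonneg zero_le_power) (auto intro: divide_nonneg_pos)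
  have num_le: "measure ?MM A' \<le> bound"
  proof (cases "A' \<in> sets ?MM")
    case False
    then show ?thesis using bound_nn by (simp add: measure_notin_sets)
  next
    case True
    define H where "H w = (\<Sum>j<n. fa (fst w) * fb j (snd w))" for w
    have Hj_meas: "(\<lambda>w. fa (fst w) * fb j (snd w)) \<in> borel_measurable ?MM" for j
      by measurable
    have "emeasure ?MM A' = (\<integral>\<^sup>+w. indicator A' w \<partial>?MM)" using True by simp
    also have "\<dots> \<le> integral\<^sup>N ?MM H"
    proof (rule nn_integral_mono)
      fix w assume w: "w \<in> space ?MM"
      show "indicator A' w \<le> H w"
      proof (cases "w \<in> A'")
        case False then show ?thesis by simp
      next
        case inA: True
        have w1: "fst w \<in> space ?M" and w2: "snd w \<in> space ?M" using w by (auto simp: space_pair_measure)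
        have ph: "phi n m y (snd w) \<le> phi n m y (fst w)" and gw: "generate N p (fst w) m = y"
          using inA by (auto simp: A'_def)
        have fB: "fst w \<in> Bset" using w1 gw by (simp add: Bset_def)
        obtain j where j: "j < n" "phi n m y (snd w) = cost_d y (\<lambda>(l, t). (snd w) ((j + l) mod n, t))"
          using phi_facts(2)[OF lenm assms(2,3)] by blast
        have c: "cost_d y (\<lambda>(l, t). (snd w) ((j + l) mod n, t)) \<le> cost_d y (fst w)"
          using j ph phi_facts(1)[OF lenm assms(2,3), of "fst w"] by linarith
        have "fa (fst w) * fb j (snd w) = ennreal (exp (lam * cost_d y (fst w)) * exp (- lam * cost_d y (\<lambda>(l, t). (snd w) ((j + l) mod n, t))))"
          using fB by (simp add: fa_def fb_def ennreal_mult)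
        also have "\<dots> = ennreal (exp (lam * (cost_d y (fst w) - cost_d y (\<lambda>(l, t). (snd w) ((j + l) mod n, t)))))"
          by (simp add: exp_add[symmetric] algebra_simps)
        also have "\<dots> \<ge> 1"
          using c lam by (simp add: ennreal_ge_1 mult_nonneg_nonneg)
        finally have "1 \<le> fa (fst w) * fb j (snd w)" .
        also have "\<dots> \<le> H w" unfolding H_def using j by (intro member_le_sum) auto
        finally show ?thesis using inA by simp
      qed
    qed
    also have "integral\<^sup>N ?MM H = (\<Sum>j<n. integral\<^sup>N ?MM (\<lambda>w. fa (fst w) * fb j (snd w)))"
      unfolding H_def by (rule nn_integral_sum) (use Hj_meas in auto)
    also have "\<dots> = (\<Sum>j<n. integral\<^sup>N ?M fa * integral\<^sup>N ?M (fb j))"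
    proof (rule sum.cong)
      fix j assume "j \<in> {..<n}"
      have "integral\<^sup>N ?MM (\<lambda>w. fa (fst w) * fb j (snd w)) = (\<integral>\<^sup>+x. \<integral>\<^sup>+z. fa x * fb j z \<partial>?M \<partial>?M)"
        using M.nn_integral_fst[OF Hj_meas[of j]] by simp
      also have "\<dots> = (\<integral>\<^sup>+x. fa x * integral\<^sup>N ?M (fb j) \<partial>?M)"
        by (intro nn_integral_cong nn_integral_cmult) simp
      also have "\<dots> = integral\<^sup>N ?M fa * integral\<^sup>N ?M (fb j)"
        by (rule nn_integral_multc) simp
      finally show "integral\<^sup>N ?MM (\<lambda>w. fa (fst w) * fb j (snd w)) = integral\<^sup>N ?M fa * integral\<^sup>N ?M (fb j)" .
    qed simp
    also have "\<dots> \<le> (\<Sum>j<n. ennreal (\<Prod>i<m. q i / (1 - lam * q i)) * ennreal (1 / (lam + 1)) ^ m)"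
      using fa_int fb_int by (intro sum_mono mult_mono) auto
    also have "\<dots> = ennreal bound"
    proof -
      define P where "P = (\<Prod>i<m. q i / (1 - lam * q i))"
      have Pnn: "0 \<le> P" unfolding P_def using q01 lq by (intro prod_nonneg) (auto intro: divide_nonneg_pos)
      have "ennreal bound = ennreal (real n * (1/(lam+1))^m) * ennreal P"
        unfolding bound_def P_def[symmetric] by (rule ennreal_mult) (use lam Pnn in auto)
      also have "ennreal (real n * (1/(lam+1))^m) = ennreal (real n) * ennreal ((1/(lam+1))^m)"
        by (rule ennreal_mult) (use lam in auto)
      also have "ennreal ((1/(lam+1))^m) = ennreal (1/(lam+1))^m"
        by (rule ennreal_power[symmetric]) (use lam in auto)
      finally have eb: "ennreal bound = ennreal (real n) * ennreal (1/(lam+1))^m * ennreal P" .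
      show ?thesis unfolding eb P_def[symmetric]
        by (simp add: ennreal_of_nat_eq_real_of_nat mult_ac)
    qed
    finally show ?thesis unfolding measure_def by (intro enn2real_leI bound_nn)
  qed
  have den: "measure ?MM {w \<in> space ?MM. generate N p (fst w) m = y} = measure ?M Bset"
  proof -
    have "{w \<in> space ?MM. generate N p (fst w) m = y} = Bset \<times> space ?M"
      by (auto simp: Bset_def space_pair_measure)
    then show ?thesis
      by (simp add: measure_def M.emeasure_pair_measure_Times[OF Bsets] M.emeasure_space_1)
  qed
  have final: "bound / measure ?M Bset \<le> 2 * real n * exp (- min (real m * a\<^sup>2 / 8) (real m * a / 4))"
  proof -
    have PBr: "(\<Prod>i<m. q i) \<le> measure ?M Bset"
      using PBge by (simp add: M.emeasure_eq_measure)
    have "bound / measure ?M Bset \<le> bound / (\<Prod>i<m. q i)"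
      using bound_nn qprod_pos PBr by (intro divide_left_mono) auto
    also have "bound / (\<Prod>i<m. q i) = real n * ((1 / (a/4 + 1))^m * (\<Prod>i<m. 1 / (1 - a/4 * q i)))"
    proof -
      define Q where "Q = (\<Prod>i<m. q i)"
      define R where "R = (\<Prod>i<m. 1 / (1 - lam * q i))"
      have e: "(\<Prod>i<m. q i / (1 - lam * q i)) = Q * R"
        unfolding Q_def R_def by (simp add: prod.distrib[symmetric])
      have bq: "bound = (real n * (1/(lam+1))^m * R) * Q" by (simp add: bound_def e mult_ac)
      have Qne: "Q \<noteq> 0" using qprod_pos unfolding Q_def[symmetric] by linarith
      have "bound / Q = real n * (1/(lam+1))^m * R"
        unfolding bq by (rule nonzero_mult_div_cancel_right[OF Qne])
      then show ?thesis unfolding Q_def R_def lam_def by (simp add: mult_ac)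
    qed
    also have "\<dots> \<le> real n * exp (- (real m * a^2 / 8))"
      using num(3) by (intro mult_left_mono) auto
    also have "\<dots> \<le> real n * exp (- min (real m * a\<^sup>2 / 8) (real m * a / 4))"
      by (intro mult_left_mono) auto
    also have "\<dots> \<le> 2 * real n * exp (- min (real m * a\<^sup>2 / 8) (real m * a / 4))"
      by simp
    finally show ?thesis .
  qed
  have "\<P>(w in ?MM. phi n m y (snd w) \<le> phi n m y (fst w) \<bar> generate N p (fst w) m = y)
      = measure ?MM A' / measure ?M Bset"
    unfolding cond_prob_def A'_def den[symmetric] by simp
  also have "\<dots> \<le> bound / measure ?M Bset"
    using num_le Bpos' by (intro divide_right_mono) auto
  also have "\<dots> \<le> 2 * real n * exp (- min (real m * a\<^sup>2 / 8) (real m * a / 4))" by (rule final)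
  finally show "\<P>(w in ?MM. phi n m y (snd w) \<le> phi n m y (fst w) \<bar> generate N p (fst w) m = y)
     \<le> 2 * real n * exp (- min (real m * (alpha p y)\<^sup>2 / 8) (real m * alpha p y / 4))"
    by (simp add: a_def)
qed

end
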